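(* Let $S$ be a numerical semigroup with multiplicity $e$ and minimal generators $e<a_1<\dots<a_t$, and let $0\le i<e$. Then ${\rm d}_{\max}(S_i)=\max_{u\in{\rm adj}(S_i)}|\mathcal R(u)|$, where ${\rm d}_{\max}(S_i)=\max_{s\in S_i}{\rm d}_{\max}(s;S)$.
   Context: A numerical semigroup is a submonoid of $(\mathbb N,+)$ with finite complement. An $S$-factorization of $n\in S$ is $(c_0,\dots,c_t)\in\mathbb N^{t+1}$ with $c_0e+\sum c_ia_i=n$, of length $\sum c_i$. ${\rm ord}(n;S)$ is the maximal such length, and ${\rm d}_{\max}(n;S)$ is the number of $S$-factorizations of $n$ of length ${\rm ord}(n;S)$. Let $d_i=a_i-e$, $B=\langle e,d_1,\dots,d_t\rangle$, $\mathcal D=(e,d_1,\dots,d_t)$. A $B^{\mathcal D}$-factorization of $b\in B$ is $(x_0,\dots,x_t)\in\mathbb N^{t+1}$ with $x_0e+\sum x_id_i=b$, of length $\sum x_i$. $\min{\rm ord}(b;B^{\mathcal D})$ is the minimal such length, and $\mathcal P(b)$ is the set of all of them. Put ${\rm adj}(s)=s-{\rm ord}(s;S)e$ and $S_i=\{s\in S:s\equiv i\pmod e\}$. Write ${\rm adj}(S_i)=\{{\rm adj}(s):s\in S_i\}=\{u_0<u_1<\cdots\}$. Define $\mathcal R(u_0)=\mathcal P(u_0)$ and, for $j>0$, $\mathcal R(u_j)=\{\mathbf x\in\mathcal P(u_j):|\mathbf x|<\min{\rm ord}(u_{j-1};B^{\mathcal D})-\frac{u_j-u_{j-1}}{e}\}$.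 *)

theory Defs
  imports Complex_Main
begin

definition numerical_semigroup :: "nat set \<Rightarrow> bool" where
  "numerical_semigroup S \<longleftrightarrow> 0 \<in> S \<and> (\<forall>x\<in>S. \<forall>y\<in>S. x + y \<in> S) \<and> finite (UNIV - S)"

definition multiplicity :: "nat set \<Rightarrow> nat" where
  "multiplicity S = (LEAST n. n \<in> S \<and> 0 < n)"

definition minimal_generators :: "nat set \<Rightarrow> nat set" where
  "minimal_generators S = {s \<in> S. s \<noteq> 0 \<and>
      \<not> (\<exists>x\<in>S. \<exists>y\<in>S. x \<noteq> 0 \<and> y \<noteq> 0 \<and> x + y = s)}"

definition facts :: "nat list \<Rightarrow> nat \<Rightarrow> nat list set" where
  "facts w n = {c. length c = length w \<and> (\<Sum>j<length w. c ! j * w ! j) = n}"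

definition ordS :: "nat list \<Rightarrow> nat \<Rightarrow> nat" where
  "ordS w n = Max (sum_list ` facts w n)"

definition dmax :: "nat list \<Rightarrow> nat \<Rightarrow> nat" where
  "dmax w n = card {c \<in> facts w n. sum_list c = ordS w n}"

definition minord :: "nat list \<Rightarrow> nat \<Rightarrow> nat" where
  "minord w b = Min (sum_list ` facts w b)"

definition Dlist :: "nat \<Rightarrow> nat list \<Rightarrow> nat list" where
  "Dlist e as = e # map (\<lambda>a. a - e) as"

definition adj :: "nat \<Rightarrow> nat list \<Rightarrow> nat \<Rightarrow> nat" where
  "adj e as s = s - ordS (e # as) s * e"

definition Sclass :: "nat set \<Rightarrow> nat \<Rightarrow> nat \<Rightarrow> nat set" where
  "Sclass S e i = {s \<in> S. s mod e = i}"

definition adjSet :: "nat set \<Rightarrow> nat \<Rightarrow> nat list \<Rightarrow> nat \<Rightarrow> nat set" where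
  "adjSet S e as i = adj e as ` Sclass S e i"

definition Rset :: "nat set \<Rightarrow> nat \<Rightarrow> nat list \<Rightarrow> nat \<Rightarrow> nat \<Rightarrow> nat list set" where
  "Rset S e as i u =
    (let A = adjSet S e as i in
     if u = Min A then facts (Dlist e as) u
     else (let u' = Max {v \<in> A. v < u} in
       {x \<in> facts (Dlist e as) u.
          real (sum_list x) < real (minord (Dlist e as) u') - (real u - real u') / real e}))"

definition dmax_class :: "nat set \<Rightarrow> nat \<Rightarrow> nat list \<Rightarrow> nat \<Rightarrow> nat" where
  "dmax_class S e as i = Max ((\<lambda>s. dmax (e # as) s) ` Sclass S e i)"

end

theory Submission
  imports Defs
begin


fun dotp :: "nat list \<Rightarrow> nat list \<Rightarrow> nat" where
  "dotp (x#xs) (w#ws) = x*w + dotp xs ws"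
| "dotp _ _ = 0"

lemma dotp_sum: "length x = length w \<Longrightarrow> (\<Sum>j<length w. x!j * w!j) = dotp x w"
  by (induction w arbitrary: x) (auto simp: length_Suc_conv sum.lessThan_Suc_shift simp del: sum.lessThan_Suc)

lemma facts_eq: "facts w n = {c. length c = length w \<and> dotp c w = n}"
  using dotp_sum by (auto simp: facts_def)

lemma dotp_add: "length x = length w \<Longrightarrow> length y = length w \<Longrightarrow>
   dotp (map2 (+) x y) w = dotp x w + dotp y w"
  by (induction w arbitrary: x y) (auto simp: length_Suc_conv algebra_simps)

lemma dotp_zero: "dotp (replicate n 0) w = 0"
  by (induction n arbitrary: w) (auto, case_tac w, auto)

lemma dotp_split: "length cs = length ws \<Longrightarrow> \<forall>a\<in>set ws. e \<le> a \<Longrightarrow>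
   dotp cs ws = dotp cs (map (\<lambda>a. a - e) ws) + sum_list cs * e"
proof (induction ws arbitrary: cs)
  case Nil then show ?case by simp
next
  case (Cons a ws)
  then obtain c cs' where c: "cs = c # cs'" "length cs' = length ws" by (auto simp: length_Suc_conv)
  have eq: "c * a = c * (a - e) + c * e" using Cons.prems by (simp add: diff_mult_distrib2)
  have ih: "dotp cs' ws = dotp cs' (map (\<lambda>a. a - e) ws) + sum_list cs' * e" using Cons c by simp
  show ?case unfolding c by (simp only: dotp.simps list.map sum_list.Cons eq ih add_mult_distrib)
qed

lemma dotp_le: "length c = length w \<Longrightarrow> \<forall>x\<in>set w. 0 < x \<Longrightarrow> y \<in> set c \<Longrightarrow> y \<le> dotp c w"
proof (induction w arbitrary: c)
  case Nil then show ?case by simp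
next
  case (Cons a ws)
  then obtain x cs' where c: "c = x # cs'" "length cs' = length ws" by (auto simp: length_Suc_conv)
  show ?case
  proof (cases "y = x")
    case True
    have "x * 1 \<le> x * a" by (rule mult_le_mono2) (use Cons in auto)
    then have "x \<le> x * a" by simp
    then show ?thesis using True c by (simp add: trans_le_add1)
  next
    case False then show ?thesis using Cons c by fastforce
  qed
qed

lemma finite_facts: "\<forall>x\<in>set w. 0 < x \<Longrightarrow> finite (facts w n)"
proof -
  assume h: "\<forall>x\<in>set w. 0 < x"
  have "facts w n \<subseteq> {c. set c \<subseteq> {0..n} \<and> length c = length w}"
    using dotp_le[OF _ h] by (fastforce simp: facts_eq)
  then show ?thesis using finite_lists_length_eq[of "{0..n}"] finite_subset by blast
qed

lemma in_set_rep: "a \<in> set ws \<Longrightarrow> \<exists>cs. length cs = length ws \<and> dotp cs ws = a"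
proof (induction ws)
  case Nil then show ?case by simp
next
  case (Cons b bs)
  show ?case
  proof (cases "a = b")
    case True
    then show ?thesis by (intro exI[of _ "1 # replicate (length bs) 0"]) (simp add: dotp_zero)
  next
    case False
    then obtain cs where "length cs = length bs \<and> dotp cs bs = a" using Cons by auto
    then show ?thesis by (intro exI[of _ "0 # cs"]) simp
  qed
qed



locale ctx =
  fixes S :: "nat set" and e i :: nat and as :: "nat list"
  assumes ns: "numerical_semigroup S"
    and srt: "sorted_wrt (<) (e # as)"
    and gens: "set (e # as) = minimal_generators S"
    and ilt: "i < e"
begin

abbreviation "W \<equiv> e # as"
abbreviation "das \<equiv> map (\<lambda>a. a - e) as"

lemma D_eq: "Dlist e as = e # das" by (simp add: Dlist_def)

lemma e_pos: "0 < e" using gens by (auto simp: minimal_generators_def)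
lemma e_in: "e \<in> S" using gens by (auto simp: minimal_generators_def)
lemma as_in: "a \<in> set as \<Longrightarrow> a \<in> S" using gens by (auto simp: minimal_generators_def)
lemma as_gt: "a \<in> set as \<Longrightarrow> e < a" using srt by simp
lemma zero_in: "0 \<in> S" using ns by (simp add: numerical_semigroup_def)
lemma add_in: "x \<in> S \<Longrightarrow> y \<in> S \<Longrightarrow> x + y \<in> S" using ns by (simp add: numerical_semigroup_def)
lemma mult_in: "x \<in> S \<Longrightarrow> k * x \<in> S"
  by (induction k) (auto simp: zero_in add_in)

lemma dotp_in: "length cs = length ws \<Longrightarrow> set ws \<subseteq> S \<Longrightarrow> dotp cs ws \<in> S"
proof (induction ws arbitrary: cs)
  case Nil then show ?case by (simp add: zero_in)
next
  case (Cons a ws)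
  then obtain c cs' where c: "cs = c # cs'" "length cs' = length ws" by (auto simp: length_Suc_conv)
  then show ?case using Cons by (auto intro!: add_in mult_in)
qed

lemma W_pos: "\<forall>x\<in>set W. 0 < x" using e_pos by (auto dest!: as_gt)
lemma D_pos: "\<forall>x\<in>set (Dlist e as). 0 < x" using e_pos as_gt by (auto simp: D_eq)
lemma finW: "finite (facts W n)" using finite_facts[OF W_pos] .
lemma finD: "finite (facts (Dlist e as) n)" using finite_facts[OF D_pos] .

lemma split_as: "length cs = length as \<Longrightarrow> dotp cs as = dotp cs das + sum_list cs * e"
  using dotp_split[of cs as e] as_gt by fastforce

lemma factsW_iff: "c \<in> facts W s \<longleftrightarrow> (\<exists>c0 cs. c = c0 # cs \<and> length cs = length as \<and> c0 * e + dotp cs as = s)"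
  by (auto simp: facts_eq length_Suc_conv mult.commute)

lemma factsD_iff: "x \<in> facts (Dlist e as) u \<longleftrightarrow> (\<exists>x0 xs. x = x0 # xs \<and> length xs = length as \<and> x0 * e + dotp xs das = u)"
  by (auto simp: facts_eq D_eq length_Suc_conv mult.commute)

lemma repr: "s \<in> S \<Longrightarrow> \<exists>c0 cs. length cs = length as \<and> c0 * e + dotp cs as = s"
proof (induction s rule: less_induct)
  case (less s)
  show ?case
  proof (cases "s = 0")
    case True then show ?thesis
      by (intro exI[of _ 0] exI[of _ "replicate (length as) 0"]) (simp add: dotp_zero)
  next
    case False
    show ?thesis
    proof (cases "s \<in> minimal_generators S")
      case True
      then have "s = e \<or> s \<in> set as" using gens by auto
      then show ?thesis
      proof
        assume "s = e" then show ?thesis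
          by (intro exI[of _ 1] exI[of _ "replicate (length as) 0"]) (simp add: dotp_zero)
      next
        assume "s \<in> set as"
        then obtain cs where "length cs = length as \<and> dotp cs as = s" using in_set_rep by blast
        then show ?thesis by (intro exI[of _ 0] exI[of _ cs]) simp
      qed
    next
      case nm: False
      then obtain x y where xy: "x \<in> S" "y \<in> S" "x \<noteq> 0" "y \<noteq> 0" "x + y = s"
        using less.prems False by (auto simp: minimal_generators_def)
      then obtain c0 cs d0 ds where "length cs = length as" "c0 * e + dotp cs as = x"
        "length ds = length as" "d0 * e + dotp ds as = y"
        using less.IH[of x] less.IH[of y] by (metis add_less_cancel_left add_less_cancel_right
             gr_zeroI less_add_same_cancel1 less_add_same_cancel2)
      then show ?thesis using xy
        by (intro exI[of _ "c0 + d0"] exI[of _ "map2 (+) cs ds"]) (simp add: dotp_add algebra_simps)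
    qed
  qed
qed

lemma facts_ne: "s \<in> S \<Longrightarrow> facts W s \<noteq> {}"
proof -
  assume "s \<in> S"
  then obtain c0 cs where "length cs = length as" "c0 * e + dotp cs as = s" using repr by blast
  then have "c0 # cs \<in> facts W s" by (simp add: factsW_iff)
  then show ?thesis by blast
qed

abbreviation ord where "ord s \<equiv> ordS W s"

lemma ord_ex: "s \<in> S \<Longrightarrow> \<exists>c\<in>facts W s. sum_list c = ord s"
proof -
  assume "s \<in> S"
  then have "ord s \<in> sum_list ` facts W s" unfolding ordS_def
    using finW facts_ne by (intro Max_in) auto
  then show ?thesis by auto
qed

lemma ord_ge: "c \<in> facts W s \<Longrightarrow> sum_list c \<le> ord s"
  unfolding ordS_def using finW by (intro Max_ge) auto

lemma ord_decomp: "s \<in> S \<Longrightarrow> \<exists>c0 cs. length cs = length as \<and> c0 + sum_list cs = ord s \<and>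
   s = ord s * e + dotp cs das"
proof -
  assume "s \<in> S"
  then obtain c where c: "c \<in> facts W s" "sum_list c = ord s" using ord_ex by blast
  then obtain c0 cs where cc: "c = c0 # cs" "length cs = length as" "c0 * e + dotp cs as = s"
    using factsW_iff by blast
  then have "s = (c0 + sum_list cs) * e + dotp cs das" using split_as[of cs] by (simp add: algebra_simps)
  then show ?thesis using c cc by auto
qed

lemma adj_eq: "s \<in> S \<Longrightarrow> s = adj e as s + ord s * e"
  using ord_decomp[of s] by (auto simp: adj_def)

lemma lemA: "x0 # xs \<in> facts (Dlist e as) u \<Longrightarrow>
   dotp xs as \<in> S \<and> dotp xs as = dotp xs das + sum_list xs * e \<and> u = x0 * e + dotp xs das
   \<and> adj e as (dotp xs as) \<le> dotp xs das"
proof -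
  assume h: "x0 # xs \<in> facts (Dlist e as) u"
  then have l: "length xs = length as" and u: "u = x0 * e + dotp xs das" by (auto simp: factsD_iff)
  have t: "dotp xs as = dotp xs das + sum_list xs * e" using split_as[OF l] .
  have inS: "dotp xs as \<in> S" using dotp_in[OF l] as_in by auto
  have "0 # xs \<in> facts W (dotp xs as)" using l by (auto simp: factsW_iff)
  then have "sum_list xs \<le> ord (dotp xs as)" using ord_ge by fastforce
  then have "sum_list xs * e \<le> ord (dotp xs as) * e" by simp
  then have "dotp xs as - ord (dotp xs as) * e \<le> dotp xs as - sum_list xs * e" by (rule diff_le_mono2)
  also have "\<dots> = dotp xs das" using t by simp
  finally have "adj e as (dotp xs as) \<le> dotp xs das" by (simp add: adj_def)
  then show ?thesis using inS t u by simp
qed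

lemma dmax_eq: "s \<in> S \<Longrightarrow> dmax W s =
   card {x \<in> facts (Dlist e as) (adj e as s). hd x = 0 \<and> sum_list x \<le> ord s}"
proof -
  assume sS: "s \<in> S"
  define L where "L = ord s"
  define u where "u = adj e as s"
  have su: "s = u + L * e" using adj_eq[OF sS] unfolding u_def L_def .
  define M where "M = {c \<in> facts W s. sum_list c = L}"
  define f :: "nat list \<Rightarrow> nat list" where "f c = 0 # tl c" for c
  have inj: "inj_on f M"
  proof (rule inj_onI)
    fix c c' assume "c \<in> M" "c' \<in> M" "f c = f c'"
    then show "c = c'" unfolding M_def f_def by (auto simp: factsW_iff)
  qed
  have img: "f ` M = {x \<in> facts (Dlist e as) u. hd x = 0 \<and> sum_list x \<le> L}"
  proof
    show "f ` M \<subseteq> {x \<in> facts (Dlist e as) u. hd x = 0 \<and> sum_list x \<le> L}"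
    proof
      fix y assume "y \<in> f ` M"
      then obtain c where c: "c \<in> M" "y = f c" by auto
      then obtain c0 cs where cc: "c = c0 # cs" "length cs = length as" "c0 * e + dotp cs as = s"
        "c0 + sum_list cs = L"
        unfolding M_def using factsW_iff by auto
      have "L * e = c0 * e + sum_list cs * e" using cc(4) by (metis add_mult_distrib)
      then have "s = L * e + dotp cs das" using split_as[of cs] cc by (simp add: algebra_simps)
      then have "dotp cs das = u" using su by simp
      then show "y \<in> {x \<in> facts (Dlist e as) u. hd x = 0 \<and> sum_list x \<le> L}"
        using c cc by (auto simp: f_def factsD_iff)
    qed
  next
    show "{x \<in> facts (Dlist e as) u. hd x = 0 \<and> sum_list x \<le> L} \<subseteq> f ` M"
    proof
      fix y assume "y \<in> {x \<in> facts (Dlist e as) u. hd x = 0 \<and> sum_list x \<le> L}"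
      then obtain xs where y: "y = 0 # xs" "length xs = length as" "dotp xs das = u"
        "sum_list xs \<le> L" by (auto simp: factsD_iff)
      have "(L - sum_list xs) * e + dotp xs as = s"
        using split_as[OF y(2)] y su by (simp add: algebra_simps diff_mult_distrib)
      then have "(L - sum_list xs) # xs \<in> M" using y unfolding M_def by (auto simp: factsW_iff)
      moreover have "f ((L - sum_list xs) # xs) = y" using y by (simp add: f_def)
      ultimately show "y \<in> f ` M" by blast
    qed
  qed
  have "dmax W s = card M" unfolding dmax_def M_def L_def by simp
  also have "\<dots> = card (f ` M)" using card_image[OF inj] by simp
  finally show ?thesis using img unfolding u_def L_def by simp
qed

end


context ctx begin

lemma cofinite: "\<exists>N. \<forall>n\<ge>N. n \<in> S"
proof -
  have "finite (UNIV - S)" using ns by (simp add: numerical_semigroup_def)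
  then obtain N where "\<forall>n\<in>UNIV - S. n < N" using finite_nat_set_iff_bounded by blast
  then show ?thesis by (metis DiffI UNIV_I not_le)
qed

definition s0 where "s0 = (LEAST s. s \<in> S \<and> s mod e = i)"

lemma s0_ex: "\<exists>s. s \<in> S \<and> s mod e = i"
proof -
  obtain N where N: "\<forall>n\<ge>N. n \<in> S" using cofinite by blast
  have "N * 1 \<le> N * e" using e_pos by (intro mult_le_mono2) simp
  then have "N \<le> N * e + i" by (simp add: trans_le_add1)
  then have "N * e + i \<in> S" using N by blast
  moreover have "(N * e + i) mod e = i" using ilt by simp
  ultimately show ?thesis by blast
qed

lemma s0: "s0 \<in> S" "s0 mod e = i"
  using LeastI_ex[OF s0_ex] unfolding s0_def by auto

definition sk where "sk k = s0 + k * e"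

lemma sk_in: "sk k \<in> S" unfolding sk_def using s0 add_in mult_in e_in by blast
lemma sk_mod: "sk k mod e = i" unfolding sk_def using s0 by simp
lemma sk_Suc: "sk (Suc k) = sk k + e" by (simp add: sk_def)

lemma Sclass_eq: "Sclass S e i = range sk"
proof
  show "range sk \<subseteq> Sclass S e i" using sk_in sk_mod by (auto simp: Sclass_def)
next
  show "Sclass S e i \<subseteq> range sk"
  proof
    fix s assume "s \<in> Sclass S e i"
    then have s: "s \<in> S" "s mod e = i" by (auto simp: Sclass_def)
    then have le: "s0 \<le> s" unfolding s0_def by (intro Least_le) simp
    then have "e dvd s - s0" using s s0 mod_eq_dvd_iff_nat by metis
    then obtain k where "s - s0 = e * k" by blast
    then have "s = sk k" using le by (simp add: sk_def mult.commute)
    then show "s \<in> range sk" by blast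
  qed
qed

definition al where "al k = adj e as (sk k)"
definition oo where "oo k = ord (sk k)"

lemma sk_dec: "sk k = al k + oo k * e" unfolding al_def oo_def using adj_eq[OF sk_in] .

lemma oo_Suc: "oo k + 1 \<le> oo (Suc k)"
proof -
  obtain c where c: "c \<in> facts W (sk k)" "sum_list c = oo k" using ord_ex[OF sk_in] oo_def by auto
  then obtain c0 cs where cc: "c = c0 # cs" "length cs = length as" "c0 * e + dotp cs as = sk k"
    using factsW_iff by blast
  then have "Suc c0 # cs \<in> facts W (sk (Suc k))" by (simp add: factsW_iff sk_Suc)
  then have "sum_list (Suc c0 # cs) \<le> oo (Suc k)" unfolding oo_def by (rule ord_ge)
  then show ?thesis using c cc by simp
qed

lemma al_Suc: "al (Suc k) \<le> al k"
proof -
  have "(oo k + 1) * e \<le> oo (Suc k) * e" using mult_le_mono1[OF oo_Suc[of k]] .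
  moreover have "al (Suc k) + oo (Suc k) * e = al k + oo k * e + e"
    using sk_dec[of "Suc k"] sk_dec[of k] sk_Suc[of k] by simp
  ultimately show ?thesis by simp
qed

lemma al_mono: "k \<le> k' \<Longrightarrow> al k' \<le> al k"
  using decseq_SucI[of al] al_Suc by (simp add: decseq_def)

lemma oo_mono: "k \<le> k' \<Longrightarrow> oo k \<le> oo k'"
proof -
  have "\<And>k. oo k \<le> oo (Suc k)" using oo_Suc by (metis add_leD1)
  then show "k \<le> k' \<Longrightarrow> oo k \<le> oo k'" using incseq_SucI[of oo] by (simp add: incseq_def)
qed

lemma oo_ge: "k \<le> oo k"
proof (induction k)
  case (Suc k) then show ?case using oo_Suc[of k] by simp
qed simp

lemma al_mod: "al k mod e = i"
  using sk_mod[of k] sk_dec[of k] by simp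

lemma A_eq: "adjSet S e as i = range al"
  unfolding adjSet_def Sclass_eq al_def by auto

lemma A_fin: "finite (adjSet S e as i)"
proof -
  have "adjSet S e as i \<subseteq> {..al 0}" using al_mono A_eq by auto
  then show ?thesis using finite_subset by blast
qed

lemma dmax_al: "dmax W (sk k) = card {x \<in> facts (Dlist e as) (al k). hd x = 0 \<and> sum_list x \<le> oo k}"
  unfolding al_def oo_def using dmax_eq[OF sk_in] .

lemma lemA': "x0 # xs \<in> facts (Dlist e as) u \<Longrightarrow> u mod e = i \<Longrightarrow>
   \<exists>m. sk m = dotp xs das + sum_list xs * e \<and> al m \<le> dotp xs das \<and> u = x0 * e + dotp xs das"
proof -
  assume h: "x0 # xs \<in> facts (Dlist e as) u" and um: "u mod e = i"
  note A = lemA[OF h]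
  have "dotp xs das mod e = i" using um A by simp
  then have "dotp xs as mod e = i" using A by simp
  then have "dotp xs as \<in> Sclass S e i" using A unfolding Sclass_def by blast
  then obtain m where m: "dotp xs as = sk m" using Sclass_eq by auto
  have "al m \<le> dotp xs das" using A m unfolding al_def by metis
  then show ?thesis using A m by (intro exI[of _ m]) simp
qed

end


lemma sum_le_dotp: "length c = length w \<Longrightarrow> \<forall>x\<in>set w. 0 < x \<Longrightarrow> sum_list c \<le> dotp c w"
proof (induction w arbitrary: c)
  case Nil then show ?case by simp
next
  case (Cons a ws)
  then obtain x cs' where c: "c = x # cs'" "length cs' = length ws" by (auto simp: length_Suc_conv)
  have "x * 1 \<le> x * a" by (rule mult_le_mono2) (use Cons in auto)
  then have "x \<le> x * a" by simp
  moreover have "sum_list cs' \<le> dotp cs' ws" using Cons c by simp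
  ultimately have "x + sum_list cs' \<le> x * a + dotp cs' ws" by (rule add_le_mono)
  then show ?case using c by simp
qed

context ctx begin

abbreviation "AA \<equiv> adjSet S e as i"
abbreviation "P u \<equiv> facts (Dlist e as) u"
definition Q where "Q u L = {x \<in> P u. hd x = 0 \<and> sum_list x \<le> L}"
definition dd where "dd k = dmax W (sk k)"

lemma dd_eq: "dd k = card (Q (al k) (oo k))" unfolding dd_def Q_def using dmax_al .

lemma Q_fin: "finite (Q u L)" unfolding Q_def using finD by simp

lemma Q_mono: "L \<le> L' \<Longrightarrow> card (Q u L) \<le> card (Q u L')"
  by (rule card_mono[OF Q_fin]) (auto simp: Q_def)

lemma P_sum_le: "x \<in> P u \<Longrightarrow> sum_list x \<le> u"
  using sum_le_dotp D_pos by (auto simp: facts_eq)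

lemma A_ne: "AA \<noteq> {}" using A_eq by auto

lemma u_mod: "u \<in> AA \<Longrightarrow> u mod e = i" using A_eq al_mod by auto

lemma key: "u \<in> AA \<Longrightarrow> \<exists>k. al k = u \<and> card (Rset S e as i u) = dd k \<and> (\<forall>k'. al k' = u \<longrightarrow> dd k' \<le> dd k)"
proof -
  assume uA: "u \<in> AA"
  define m0 where "m0 = Min AA"
  have m0A: "m0 \<in> AA" unfolding m0_def using A_fin A_ne by simp
  have m0le: "\<And>v. v \<in> AA \<Longrightarrow> m0 \<le> v" unfolding m0_def using A_fin by simp
  obtain k1 where k1: "al k1 = m0" using m0A A_eq by auto
  have stab: "\<And>k. k1 \<le> k \<Longrightarrow> al k = m0"
    using al_mono k1 m0le A_eq by (metis antisym rangeI)
  show ?thesis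
  proof (cases "u = m0")
    case True
    have R: "Rset S e as i u = P u" using True by (simp add: Rset_def Let_def m0_def)
    have hd0: "hd x = 0" if x: "x \<in> P u" for x
    proof (rule ccontr)
      assume nz: "hd x \<noteq> 0"
      obtain x0 xs where xx: "x = x0 # xs" using x by (auto simp: factsD_iff)
      obtain m where m: "al m \<le> dotp xs das" "u = x0 * e + dotp xs das"
        using lemA'[of x0 xs u] x xx u_mod[OF uA] by blast
      have "0 < x0 * e" using nz xx e_pos by simp
      then have "al m < m0" using m True by linarith
      then show False using m0le[of "al m"] A_eq by auto
    qed
    define k where "k = max k1 u"
    have alk: "al k = u" using stab True k_def by simp
    have "Q u (oo k) = P u"
    proof -
      have "u \<le> oo k" using oo_ge[of k] k_def by simp
      then show ?thesis using hd0 P_sum_le unfolding Q_def by (auto intro: order_trans)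
    qed
    then have ck: "card (Rset S e as i u) = dd k" using R dd_eq alk by simp
    have "dd k' \<le> dd k" if "al k' = u" for k'
    proof -
      have "card (Q u (oo k')) \<le> card (P u)" by (rule card_mono[OF finD]) (auto simp: Q_def)
      then show ?thesis using dd_eq that ck R by simp
    qed
    then show ?thesis using alk ck by blast
  next
    case False
    define K where "K = {k. al k = u}"
    have Kb: "K \<subseteq> {..<k1}"
    proof
      fix k assume "k \<in> K"
      then have "al k = u" by (simp add: K_def)
      moreover have "m0 < u" using False m0le[OF uA] by simp
      ultimately show "k \<in> {..<k1}" using stab by (metis leI lessThan_iff less_irrefl)
    qed
    have Kne: "K \<noteq> {}" using uA A_eq K_def by auto
    define ks where "ks = Max K"
    have ksK: "ks \<in> K" unfolding ks_def using Kb Kne finite_subset by (intro Max_in) auto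
    have ksmax: "k \<le> ks" if "al k = u" for k
      unfolding ks_def using Kb K_def that finite_subset by (intro Max_ge) auto
    have alks: "al ks = u" using ksK K_def by simp
    have alS: "al (Suc ks) < u"
    proof -
      have "al (Suc ks) \<noteq> u" using ksmax[of "Suc ks"] by auto
      then show ?thesis using al_Suc[of ks] alks by simp
    qed
    define u' where "u' = Max {v \<in> AA. v < u}"
    have fin': "finite {v \<in> AA. v < u}" using A_fin by simp
    have u'eq: "u' = al (Suc ks)"
    proof -
      have mem: "al (Suc ks) \<in> {v \<in> AA. v < u}" using alS A_eq by auto
      then have ne: "{v \<in> AA. v < u} \<noteq> {}" by blast
      have "u' \<in> {v \<in> AA. v < u}" unfolding u'_def using fin' ne by (rule Max_in)
      then obtain k' where k': "al k' = u'" "u' < u" using A_eq by auto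
      have "Suc ks \<le> k'"
      proof (rule ccontr)
        assume "\<not> Suc ks \<le> k'"
        then have "al ks \<le> al k'" using al_mono by simp
        then show False using k' alks by simp
      qed
      then have "u' \<le> al (Suc ks)" using al_mono k' by metis
      moreover have "al (Suc ks) \<le> u'" unfolding u'_def using fin' mem by (rule Max_ge)
      ultimately show ?thesis by simp
    qed
    define L' where "L' = oo (Suc ks)"
    have ident: "u' + L' * e = u + oo ks * e + e"
      using sk_dec[of "Suc ks"] sk_dec[of ks] sk_Suc[of ks] u'eq alks L'_def by simp
    have minord_eq: "minord (Dlist e as) u' = L'"
    proof -
      obtain c where c: "c \<in> facts W (sk (Suc ks))" "sum_list c = L'"
        using ord_ex[OF sk_in] L'_def oo_def by auto
      then obtain c0 cs where cc: "c = c0 # cs" "length cs = length as" "c0 * e + dotp cs as = sk (Suc ks)"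
        using factsW_iff by blast
      have "sk (Suc ks) = (c0 + sum_list cs) * e + dotp cs das"
        using split_as[OF cc(2)] cc(3) by (simp add: algebra_simps)
      then have "sk (Suc ks) = L' * e + dotp cs das" using c cc by simp
      then have "dotp cs das = u'" using sk_dec[of "Suc ks"] u'eq L'_def by simp
      then have mem: "0 # cs \<in> P u'" using cc by (simp add: factsD_iff)
      have ne: "P u' \<noteq> {}" using mem by blast
      have le1: "minord (Dlist e as) u' \<le> L'"
      proof -
        have "minord (Dlist e as) u' \<le> sum_list (0 # cs)" unfolding minord_def
          using finD mem by (intro Min_le) (auto simp del: sum_list.Cons)
        then show ?thesis using c cc by simp
      qed
      have ge: "L' \<le> sum_list x" if x: "x \<in> P u'" for x
      proof -
        obtain x0 xs where xx: "x = x0 # xs" using x by (auto simp: factsD_iff)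
        have u'A: "u' \<in> AA" using u'eq A_eq by simp
        obtain m where m: "sk m = dotp xs das + sum_list xs * e" "al m \<le> dotp xs das"
            "u' = x0 * e + dotp xs das"
          using lemA'[of x0 xs u'] x xx u_mod[OF u'A] by blast
        have "Suc ks \<le> m"
        proof (rule ccontr)
          assume "\<not> Suc ks \<le> m"
          then have "u \<le> al m" using al_mono[of m ks] alks by simp
          then show False using m alS u'eq by simp
        qed
        then have "sk (Suc ks) \<le> sk m" using mult_le_mono1[of "Suc ks" m e] by (simp add: sk_def)
        then have "u' + L' * e \<le> dotp xs das + sum_list xs * e"
          using sk_dec[of "Suc ks"] u'eq L'_def m by simp
        then have "(x0 + L') * e \<le> sum_list xs * e" using m by (simp add: algebra_simps)
        then have "x0 + L' \<le> sum_list xs" using e_pos by simp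
        then show ?thesis using xx by simp
      qed
      have "L' \<le> minord (Dlist e as) u'" unfolding minord_def
        using finD ne ge by (subst Min_ge_iff) auto
      then show ?thesis using le1 by simp
    qed
    have thr: "real (minord (Dlist e as) u') - (real u - real u') / real e = real (oo ks) + 1"
    proof -
      have "real u' + real L' * real e = real u + real (oo ks) * real e + real e"
        using ident by (metis of_nat_add of_nat_mult)
      then have "real L' * real e - (real u - real u') = (real (oo ks) + 1) * real e"
        by (simp add: algebra_simps)
      then have "real L' - (real u - real u') / real e = real (oo ks) + 1"
        using e_pos by (simp add: field_simps)
      then show ?thesis using minord_eq by simp
    qed
    have R: "Rset S e as i u = {x \<in> P u. real (sum_list x) < real (oo ks) + 1}"
      using False thr by (simp add: Rset_def Let_def m0_def u'_def)
    have RQ: "Rset S e as i u = Q u (oo ks)"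
    proof -
      have "hd x = 0" if x: "x \<in> P u" and sx: "sum_list x \<le> oo ks" for x
      proof (rule ccontr)
        assume nz: "hd x \<noteq> 0"
        obtain x0 xs where xx: "x = x0 # xs" using x by (auto simp: factsD_iff)
        obtain m where m: "sk m = dotp xs das + sum_list xs * e" "al m \<le> dotp xs das"
            "u = x0 * e + dotp xs das"
          using lemA'[of x0 xs u] x xx u_mod[OF uA] by blast
        have "0 < x0 * e" using nz xx e_pos by simp
        then have "al m < u" using m by linarith
        then have "Suc ks \<le> m" using al_mono[of m ks] alks by (metis not_less_eq_eq not_le)
        then have "sk (Suc ks) \<le> sk m" using mult_le_mono1[of "Suc ks" m e] by (simp add: sk_def)
        then have "u + oo ks * e + e \<le> dotp xs das + sum_list xs * e"
          using sk_dec[of ks] sk_Suc[of ks] alks m by simp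
        then have "(x0 + oo ks + 1) * e \<le> sum_list xs * e" using m by (simp add: algebra_simps)
        then have "x0 + oo ks + 1 \<le> sum_list xs" using e_pos by (metis mult_le_cancel2)
        then show False using sx xx by simp
      qed
      then show ?thesis unfolding R Q_def by fastforce
    qed
    have ck: "card (Rset S e as i u) = dd ks" using RQ dd_eq alks by simp
    have "dd k' \<le> dd ks" if "al k' = u" for k'
      using dd_eq that alks Q_mono oo_mono ksmax by metis
    then show ?thesis using alks ck by blast
  qed
qed

lemma main: "dmax_class S e as i = Max ((\<lambda>u. card (Rset S e as i u)) ` AA)"
proof -
  define F where "F = (\<lambda>u. card (Rset S e as i u)) ` AA"
  have Ffin: "finite F" "F \<noteq> {}" using A_fin A_ne F_def by auto
  have dc: "dmax_class S e as i = Max (range dd)"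
    unfolding dmax_class_def Sclass_eq dd_def by (simp add: image_comp comp_def)
  have b: "dd k \<le> Max F" for k
  proof -
    have "al k \<in> AA" using A_eq by auto
    then obtain k' where "al k' = al k" "card (Rset S e as i (al k)) = dd k'" "dd k \<le> dd k'"
      using key by blast
    moreover have "card (Rset S e as i (al k)) \<in> F" using \<open>al k \<in> AA\<close> F_def by auto
    ultimately show ?thesis using Ffin by (metis Max_ge order_trans)
  qed
  have dfin: "finite (range dd)"
    by (rule finite_subset[of _ "{..Max F}"]) (use b in auto)
  have "Max (range dd) \<le> Max F" using dfin b by (subst Max_le_iff) auto
  moreover have "Max F \<le> Max (range dd)"
  proof -
    have "Max F \<in> F" using Ffin by simp
    then obtain u where "u \<in> AA" "Max F = card (Rset S e as i u)" using F_def by auto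
    then obtain k where "Max F = dd k" using key by metis
    then show ?thesis using dfin by simp
  qed
  ultimately show ?thesis using dc F_def by simp
qed

end

theorem corollary3p10:
  fixes S :: "nat set" and e i :: nat and as :: "nat list"
  assumes "numerical_semigroup S"
    and "e = multiplicity S"
    and "sorted_wrt (<) (e # as)"
    and "set (e # as) = minimal_generators S"
    and "i < e"
  shows "dmax_class S e as i = Max ((\<lambda>u. card (Rset S e as i u)) ` adjSet S e as i)"
proof -
  interpret ctx S e i as using assms by unfold_locales auto
  show ?thesis by (rule main)
qed

end
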